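(* Let $t\ge 2$ be an integer and let $G_1,G_2,\dots,G_t$ be cyclically orderable graphs, each with at least two vertices, with $d(G_1)=d(G_2)=\cdots=d(G_t)$. Then any series composition $G_1\oplus G_2\oplus\cdots\oplus G_t$ is cyclically orderable.
   Context: The density of a connected graph $G$ with at least two vertices is $d(G)=\frac{|E(G)|}{|V(G)|-1}$. A cyclic base ordering (CBO) of a connected graph $G$ is a bijection $\mathcal{O}:E(G)\to\{1,\dots,|E(G)|\}$ such that for every $i\in\{1,\dots,|E(G)|\}$ the edges $\mathcal{O}^{-1}(i),\dots,\mathcal{O}^{-1}(i+|V(G)|-2)$ (indices taken cyclically modulo $|E(G)|$) induce a spanning tree of $G$; $G$ is cyclically orderable if it has a CBO. Given graphs $G$ and $H$ (vertex-disjoint) with $u\in V(G)$ and $v\in V(H)$, the series composition $G\oplus H$ is obtained from the disjoint union of $G$ and $H$ by identifying $u$ and $v$ into a single vertex. $G_1\oplus\cdots\oplus G_t$ denotes an iterated series composition $(\cdots(G_1\oplus G_2)\oplus\cdots)\oplus G_t$ with arbitrary choices of glued vertices at each step. *)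

theory Defs
  imports Complex_Main
begin

text \<open>Finite loopless multigraphs: an abstract edge set with an endpoint map.\<close>

record ('v, 'e) mgraph =
  verts :: "'v set"
  edges :: "'e set"
  ends  :: "'e \<Rightarrow> 'v set"

definition wf_graph :: "('v, 'e) mgraph \<Rightarrow> bool" where
  "wf_graph G \<longleftrightarrow> finite (verts G) \<and> finite (edges G) \<and>
     (\<forall>e\<in>edges G. ends G e \<subseteq> verts G \<and> card (ends G e) = 2)"

definition adj_in :: "('v, 'e) mgraph \<Rightarrow> 'e set \<Rightarrow> 'v \<Rightarrow> 'v \<Rightarrow> bool" where
  "adj_in G T x y \<longleftrightarrow> (\<exists>e\<in>T. ends G e = {x, y})"

definition connected_on :: "('v, 'e) mgraph \<Rightarrow> 'e set \<Rightarrow> bool" where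
  "connected_on G T \<longleftrightarrow> verts G \<noteq> {} \<and>
     (\<forall>x\<in>verts G. \<forall>y\<in>verts G. (x, y) \<in> {(a, b). adj_in G T a b}\<^sup>*)"

definition connected_graph :: "('v, 'e) mgraph \<Rightarrow> bool" where
  "connected_graph G \<longleftrightarrow> connected_on G (edges G)"

definition spanning_tree :: "('v, 'e) mgraph \<Rightarrow> 'e set \<Rightarrow> bool" where
  "spanning_tree G T \<longleftrightarrow> T \<subseteq> edges G \<and> connected_on G T \<and> card T = card (verts G) - 1"

definition density :: "('v, 'e) mgraph \<Rightarrow> real" where
  "density G = real (card (edges G)) / (real (card (verts G)) - 1)"

text \<open>Cyclic base ordering, with positions 0..m-1 (m = |E|) instead of 1..m.
  The window starting at position i consists of the edges at positions
  i, i+1, ..., i+|V|-2 taken modulo m.\<close>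
definition cbo_window :: "('v, 'e) mgraph \<Rightarrow> ('e \<Rightarrow> nat) \<Rightarrow> nat \<Rightarrow> 'e set" where
  "cbo_window G ord i = {e \<in> edges G. \<exists>j < card (verts G) - 1.
      ord e = (i + j) mod card (edges G)}"

definition is_cbo :: "('v, 'e) mgraph \<Rightarrow> ('e \<Rightarrow> nat) \<Rightarrow> bool" where
  "is_cbo G ord \<longleftrightarrow> bij_betw ord (edges G) {0..<card (edges G)} \<and>
     (\<forall>i < card (edges G). spanning_tree G (cbo_window G ord i))"

definition cyclically_orderable :: "('v, 'e) mgraph \<Rightarrow> bool" where
  "cyclically_orderable G \<longleftrightarrow> connected_graph G \<and> (\<exists>ord. is_cbo G ord)"

definition tag_graph :: "nat \<Rightarrow> ('v, 'e) mgraph \<Rightarrow> (nat \<times> 'v, nat \<times> 'e) mgraph" where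
  "tag_graph k G = \<lparr>verts = Pair k ` verts G, edges = Pair k ` edges G,
     ends = (\<lambda>p. Pair k ` ends G (snd p))\<rparr>"

definition glue :: "(nat \<times> 'v, nat \<times> 'e) mgraph \<Rightarrow> nat \<Rightarrow> ('v, 'e) mgraph \<Rightarrow> 'v \<Rightarrow> nat \<times> 'v
     \<Rightarrow> (nat \<times> 'v, nat \<times> 'e) mgraph" where
  "glue C k G v w = \<lparr>verts = verts C \<union> Pair k ` (verts G - {v}),
     edges = edges C \<union> Pair k ` edges G,
     ends = (\<lambda>p. if p \<in> edges C then ends C p
                 else (\<lambda>x. if x = v then w else (k, x)) ` ends G (snd p))\<rparr>"

text \<open>series_comp Gs k H: H is some iterated series composition
  (\<dots>(G_0 \<oplus> G_1) \<oplus> \<dots>) \<oplus> G_k, with arbitrary glued vertices at each step.\<close>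
inductive series_comp :: "(nat \<Rightarrow> ('v, 'e) mgraph) \<Rightarrow> nat \<Rightarrow> (nat \<times> 'v, nat \<times> 'e) mgraph \<Rightarrow> bool"
  for Gs where
  base: "series_comp Gs 0 (tag_graph 0 (Gs 0))"
| step: "series_comp Gs k C \<Longrightarrow> v \<in> verts (Gs (Suc k)) \<Longrightarrow> w \<in> verts C \<Longrightarrow>
          series_comp Gs (Suc k) (glue C (Suc k) (Gs (Suc k)) v w)"

end

theory Submission
  imports Defs
begin

definition FF :: "int \<Rightarrow> int \<Rightarrow> int \<Rightarrow> int \<Rightarrow> int" where
  "FF s P a x = (x div s) * P + a + x mod s"

lemma FF_shift: "s > 0 \<Longrightarrow> FF s P a (x + k * s) = FF s P a x + k * P"
  unfolding FF_def by (simp add: algebra_simps)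

lemma FF_mono:
  assumes "s > 0" "s \<le> P" "x \<le> y"
  shows "FF s P a x \<le> FF s P a y"
proof (cases "x div s = y div s")
  case True
  then have "x mod s \<le> y mod s"
    using assms by (metis add_le_cancel_left div_mult_mod_eq)
  then show ?thesis using True unfolding FF_def by simp
next
  case False
  have "x div s \<le> y div s" using assms by (simp add: zdiv_mono1)
  with False have lt: "x div s + 1 \<le> y div s" by simp
  have "x mod s < s" "0 \<le> y mod s" using assms by auto
  have "(x div s + 1) * P \<le> (y div s) * P"
    using lt assms by (intro mult_right_mono) auto
  then have "(x div s) * P + P \<le> (y div s) * P" by (simp add: algebra_simps)
  then have "x mod s + (x div s) * P \<le> y mod s + (y div s) * P"
    using \<open>x mod s < s\<close> \<open>0 \<le> y mod s\<close> assms by linarith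
  then show ?thesis unfolding FF_def by simp
qed

lemma FF_bracket:
  assumes "s > 0" "s \<le> P" "0 \<le> a" "P > 0"
  shows "\<exists>x. FF s P a (x - 1) < i \<and> i \<le> FF s P a x"
proof -
  define lo where "lo = - (\<bar>i\<bar> + a + 1) * s"
  have flo: "FF s P a lo < i"
  proof -
    have "FF s P a lo = FF s P a 0 + (- (\<bar>i\<bar> + a + 1)) * P"
      unfolding lo_def using FF_shift[OF assms(1), where x=0 and k="- (\<bar>i\<bar> + a + 1)" and P=P and a=a] by simp
    also have "FF s P a 0 = a" unfolding FF_def by simp
    finally have X: "FF s P a lo = a - (\<bar>i\<bar> + a + 1) * P" by (simp add: algebra_simps)
    have "(\<bar>i\<bar> + a + 1) \<le> (\<bar>i\<bar> + a + 1) * P"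
      using mult_left_mono[of 1 P "\<bar>i\<bar> + a + 1"] assms by simp
    then show ?thesis using X assms abs_ge_minus_self[of i] abs_ge_self[of i] by linarith
  qed
  define hi where "hi = \<bar>i\<bar> * s"
  have fhi: "i \<le> FF s P a hi"
  proof -
    have "FF s P a hi = FF s P a 0 + \<bar>i\<bar> * P"
      unfolding hi_def using FF_shift[OF assms(1), where x=0 and k="\<bar>i\<bar>" and P=P and a=a] by simp
    also have "FF s P a 0 = a" unfolding FF_def by simp
    finally have X: "FF s P a hi = a + \<bar>i\<bar> * P" .
    have "\<bar>i\<bar> \<le> \<bar>i\<bar> * P"
      using mult_left_mono[of 1 P "\<bar>i\<bar>"] assms by simp
    then show ?thesis using X assms abs_ge_minus_self[of i] abs_ge_self[of i] by linarith
  qed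
  have ex: "\<exists>n::nat. i \<le> FF s P a (lo + int n)"
  proof (rule exI[of _ "nat (hi - lo)"])
    have "lo \<le> 0" "0 \<le> hi" unfolding lo_def hi_def using assms
      by (simp_all add: mult_nonpos_nonneg)
    then have "lo + int (nat (hi - lo)) = hi" by simp
    then show "i \<le> FF s P a (lo + int (nat (hi - lo)))" using fhi by simp
  qed
  define n where "n = (LEAST n::nat. i \<le> FF s P a (lo + int n))"
  have n1: "i \<le> FF s P a (lo + int n)" unfolding n_def using ex by (rule LeastI_ex)
  have "n \<noteq> 0"
  proof
    assume "n = 0" then show False using n1 flo by simp
  qed
  then obtain n' where n': "n = Suc n'" by (cases n) auto
  have "\<not> i \<le> FF s P a (lo + int n')"
    using not_less_Least[of n' "\<lambda>n. i \<le> FF s P a (lo + int n)"] n' n_def by auto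
  then show ?thesis using n1 n' by (intro exI[of _ "lo + int n"]) auto
qed

lemma FF_key:
  assumes "s > 0" "s \<le> P" "0 \<le> a" "P > 0" "p > 0" "g \<ge> 0"
  shows "\<exists>i1. \<forall>n. ((FF s P a n - i) mod (p * P) < g * P) \<longleftrightarrow> ((n - i1) mod (p * s) < g * s)"
proof -
  obtain i1 where b1: "FF s P a (i1 - 1) < i" and b2: "i \<le> FF s P a i1"
    using FF_bracket[OF assms(1-4)] by blast
  show ?thesis
  proof (intro exI allI)
    fix n
    define y where "y = (n - i1) mod (p * s)"
    define q where "q = (n - i1) div (p * s)"
    have ps: "p * s > 0" using assms by simp
    have y0: "0 \<le> y" "y < p * s" unfolding y_def using ps by auto
    have n_eq: "n = (i1 + y) + (q * p) * s" unfolding y_def q_def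
      using div_mult_mod_eq[of "n - i1" "p * s"] by (simp add: algebra_simps)
    have Fn: "FF s P a n = FF s P a (i1 + y) + q * (p * P)"
      using FF_shift[OF assms(1), where x="i1 + y" and k="q * p" and P=P and a=a] n_eq by (simp add: algebra_simps)
    have lo: "i \<le> FF s P a (i1 + y)" using FF_mono[OF assms(1,2), of i1 "i1 + y" a] y0 b2 by simp
    have "FF s P a (i1 + y) \<le> FF s P a ((i1 - 1) + p * s)"
      using FF_mono[OF assms(1,2)] y0 by simp
    also have "\<dots> = FF s P a (i1 - 1) + p * P" using FF_shift[OF assms(1)] by (simp add: mult.commute)
    finally have hi: "FF s P a (i1 + y) - i < p * P" using b1 by simp
    have md: "(FF s P a n - i) mod (p * P) = FF s P a (i1 + y) - i"
    proof -
      have "(FF s P a n - i) mod (p * P) = (FF s P a (i1 + y) - i + q * (p * P)) mod (p * P)"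
        using Fn by (simp add: algebra_simps)
      also have "\<dots> = (FF s P a (i1 + y) - i) mod (p * P)" by simp
      also have "\<dots> = FF s P a (i1 + y) - i" using lo hi by (intro mod_pos_pos_trivial) auto
      finally show ?thesis .
    qed
    have "(FF s P a (i1 + y) - i < g * P) \<longleftrightarrow> y < g * s"
    proof
      assume h: "FF s P a (i1 + y) - i < g * P"
      show "y < g * s"
      proof (rule ccontr)
        assume "\<not> y < g * s"
        then have "FF s P a (i1 + g * s) \<le> FF s P a (i1 + y)" using FF_mono[OF assms(1,2)] by simp
        moreover have "FF s P a (i1 + g * s) = FF s P a i1 + g * P" using FF_shift[OF assms(1)] by simp
        ultimately show False using h b2 by simp
      qed
    next
      assume "y < g * s"
      then have "FF s P a (i1 + y) \<le> FF s P a ((i1 - 1) + g * s)" using FF_mono[OF assms(1,2)] by simp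
      moreover have "FF s P a ((i1 - 1) + g * s) = FF s P a (i1 - 1) + g * P" using FF_shift[OF assms(1)] by simp
      ultimately show "FF s P a (i1 + y) - i < g * P" using b1 by simp
    qed
    then show "((FF s P a n - i) mod (p * P) < g * P) \<longleftrightarrow> ((n - i1) mod (p * s) < g * s)"
      using md y_def by simp
  qed
qed


definition win :: "('e \<Rightarrow> nat) \<Rightarrow> 'e set \<Rightarrow> nat \<Rightarrow> nat \<Rightarrow> nat \<Rightarrow> 'e set" where
  "win f E m L i = {e \<in> E. \<exists>j<L. f e = (i + j) mod m}"

lemma win_char:
  assumes "0 < m" "x < m"
  shows "(\<exists>j<L. x = (i + j) mod m) \<longleftrightarrow> (int x - int i) mod int m < int L"
proof
  assume "\<exists>j<L. x = (i + j) mod m"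
  then obtain j where j: "j < L" "x = (i + j) mod m" by blast
  have ix: "int x = (int i + int j) mod int m" using j(2) by (simp add: zmod_int)
  have "(int x - int i) mod int m = ((int i + int j) mod int m - int i) mod int m" using ix by simp
  also have "\<dots> = (int i + int j - int i) mod int m" by (rule mod_diff_left_eq)
  also have "\<dots> = int j mod int m" by simp
  finally have "(int x - int i) mod int m = int j mod int m" .
  also have "\<dots> \<le> int j" using assms by (simp add: zmod_le_nonneg_dividend)
  finally show "(int x - int i) mod int m < int L" using j by simp
next
  assume h: "(int x - int i) mod int m < int L"
  define j where "j = nat ((int x - int i) mod int m)"
  have ij: "int j = (int x - int i) mod int m" unfolding j_def using assms by simp
  have "j < L" using h ij by simp
  moreover have "x = (i + j) mod m"
  proof -
    have "int ((i + j) mod m) = (int i + (int x - int i) mod int m) mod int m"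
      using ij by (simp add: zmod_int)
    also have "\<dots> = (int i + (int x - int i)) mod int m" by (simp add: mod_add_right_eq)
    also have "\<dots> = int x" using assms by simp
    finally show ?thesis by simp
  qed
  ultimately show "\<exists>j<L. x = (i + j) mod m" by blast
qed

lemma win_mem:
  assumes "0 < m" "f e < m"
  shows "e \<in> win f E m L i \<longleftrightarrow> e \<in> E \<and> (int (f e) - int i) mod int m < int L"
  using win_char[OF assms] unfolding win_def by blast

lemma qP_bound:
  fixes q c p P :: nat
  assumes "q < p" "c < P"
  shows "q * P + c < p * P"
proof -
  have "q * P + c < (q + 1) * P" using assms by simp
  also have "\<dots> \<le> p * P" using assms by (intro mult_right_mono) auto
  finally show ?thesis .
qed

lemma merge:
  fixes E1 E2 :: "'e set" and o1 o2 :: "'e \<Rightarrow> nat"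
  assumes disj: "E1 \<inter> E2 = {}"
    and b1: "bij_betw o1 E1 {0..<m1}" and b2: "bij_betw o2 E2 {0..<m2}"
    and r1: "r1 > 0" and r2: "r2 > 0" and m1: "m1 > 0" and m2: "m2 > 0"
    and dens: "m1 * r2 = m2 * r1"
  shows "\<exists>f. bij_betw f (E1 \<union> E2) {0..<m1 + m2} \<and>
     (\<forall>i < m1 + m2. \<exists>i1<m1. \<exists>i2<m2.
        win f (E1 \<union> E2) (m1 + m2) (r1 + r2) i \<inter> E1 = win o1 E1 m1 r1 i1 \<and>
        win f (E1 \<union> E2) (m1 + m2) (r1 + r2) i \<inter> E2 = win o2 E2 m2 r2 i2)"
proof -
  define g where "g = gcd r1 r2"
  define s1 where "s1 = r1 div g"
  define s2 where "s2 = r2 div g"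
  define P where "P = s1 + s2"
  define p where "p = m1 div s1"
  have g0: "g > 0" using r1 unfolding g_def by simp
  have r1e: "r1 = g * s1" unfolding s1_def g_def by simp
  have r2e: "r2 = g * s2" unfolding s2_def g_def by simp
  have s10: "s1 > 0" using r1 r1e by (cases s1) auto
  have s20: "s2 > 0" using r2 r2e by (cases s2) auto
  have cop: "coprime s1 s2" unfolding s1_def s2_def g_def using r1 by (intro div_gcd_coprime) auto
  have "g * (m1 * s2) = g * (m2 * s1)" using dens r1e r2e by (simp add: ac_simps)
  then have d2: "m1 * s2 = m2 * s1" using g0 by simp
  have "s1 dvd m1 * s2" using d2 by simp
  then have "s1 dvd m1" using cop by (simp add: coprime_dvd_mult_left_iff)
  then have m1e: "m1 = p * s1" unfolding p_def by simp
  have "m2 * s1 = m1 * s2" using d2 by simp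
  also have "\<dots> = (p * s2) * s1" unfolding m1e by (simp only: mult.assoc mult.commute mult.left_commute)
  finally have "m2 * s1 = (p * s2) * s1" .
  then have m2e: "m2 = p * s2" using s10 by auto
  have p0: "p > 0" using m1 m1e by (cases p) auto
  have mP: "m1 + m2 = p * P" unfolding P_def using m1e m2e by (simp add: algebra_simps)
  have rP: "r1 + r2 = g * P" unfolding P_def using r1e r2e by (simp add: algebra_simps)
  define f where "f e = (if e \<in> E1 then (o1 e div s1) * P + o1 e mod s1
                         else (o2 e div s2) * P + (s1 + o2 e mod s2))" for e
  have o1r: "o1 e < m1" if "e \<in> E1" for e using b1 that by (auto simp: bij_betw_def)
  have o2r: "o2 e < m2" if "e \<in> E2" for e using b2 that by (auto simp: bij_betw_def)
  have f1: "f e = (o1 e div s1) * P + o1 e mod s1" if "e \<in> E1" for e using that f_def by simp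
  have f2: "f e = (o2 e div s2) * P + (s1 + o2 e mod s2)" if "e \<in> E2" for e
    using that disj f_def by auto
  have lt1: "o1 e mod s1 < P" for e
  proof -
    have "o1 e mod s1 < s1" using s10 by simp
    then show ?thesis unfolding P_def by linarith
  qed
  have lt2: "s1 + o2 e mod s2 < P" for e using s20 unfolding P_def by simp
  have fr: "f e < m1 + m2" if "e \<in> E1 \<union> E2" for e
  proof (cases "e \<in> E1")
    case True
    have "o1 e div s1 < p" using o1r[OF True] m1e s10 by (simp add: div_less_iff_less_mult)
    then show ?thesis unfolding f1[OF True] mP by (rule qP_bound[OF _ lt1])
  next
    case False
    then have e2: "e \<in> E2" using that by simp
    have "o2 e div s2 < p" using o2r[OF e2] m2e s20 by (simp add: div_less_iff_less_mult)
    then show ?thesis unfolding f2[OF e2] mP by (rule qP_bound[OF _ lt2])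
  qed
  have fdiv1: "f e div P = o1 e div s1" "f e mod P = o1 e mod s1" if "e \<in> E1" for e
    using f1[OF that] lt1[of e] by simp_all
  have fdiv2: "f e div P = o2 e div s2" "f e mod P = s1 + o2 e mod s2" if "e \<in> E2" for e
    using f2[OF that] lt2[of e] by simp_all
  have inj: "inj_on f (E1 \<union> E2)"
  proof (rule inj_onI)
    fix x y assume x: "x \<in> E1 \<union> E2" and y: "y \<in> E1 \<union> E2" and fxy: "f x = f y"
    show "x = y"
    proof (cases "x \<in> E1")
      case xT: True
      show ?thesis
      proof (cases "y \<in> E1")
        case True
        have d: "o1 x div s1 = o1 y div s1" and m: "o1 x mod s1 = o1 y mod s1"
          using fdiv1[OF xT] fdiv1[OF True] fxy by simp_all
        have "o1 x = o1 x div s1 * s1 + o1 x mod s1" by simp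
        also have "\<dots> = o1 y div s1 * s1 + o1 y mod s1" by (simp only: d m)
        also have "\<dots> = o1 y" by simp
        finally have "o1 x = o1 y" .
        then show ?thesis using b1 xT True by (auto simp: bij_betw_def inj_on_def)
      next
        case False
        then have y2: "y \<in> E2" using y by simp
        have "f x mod P < s1" using fdiv1(2)[OF xT] s10 by simp
        moreover have "s1 \<le> f y mod P" using fdiv2(2)[OF y2] by simp
        ultimately show ?thesis using fxy by simp
      qed
    next
      case xF: False
      then have x2: "x \<in> E2" using x by simp
      show ?thesis
      proof (cases "y \<in> E1")
        case True
        have "f y mod P < s1" using fdiv1(2)[OF True] s10 by simp
        moreover have "s1 \<le> f x mod P" using fdiv2(2)[OF x2] by simp
        ultimately show ?thesis using fxy by simp
      next
        case False
        then have y2: "y \<in> E2" using y by simp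
        have d: "o2 x div s2 = o2 y div s2" and m: "o2 x mod s2 = o2 y mod s2"
          using fdiv2[OF x2] fdiv2[OF y2] fxy by simp_all
        have "o2 x = o2 x div s2 * s2 + o2 x mod s2" by simp
        also have "\<dots> = o2 y div s2 * s2 + o2 y mod s2" by (simp only: d m)
        also have "\<dots> = o2 y" by simp
        finally have "o2 x = o2 y" .
        then show ?thesis using b2 x2 y2 by (auto simp: bij_betw_def inj_on_def)
      qed
    qed
  qed
  have fin1: "finite E1" using b1 bij_betw_finite by blast
  have fin2: "finite E2" using b2 bij_betw_finite by blast
  have cE: "card (E1 \<union> E2) = m1 + m2"
    using bij_betw_same_card[OF b1] bij_betw_same_card[OF b2] card_Un_disjoint[OF fin1 fin2 disj] by simp
  have bij: "bij_betw f (E1 \<union> E2) {0..<m1 + m2}"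
  proof -
    have sub: "f ` (E1 \<union> E2) \<subseteq> {0..<m1 + m2}" using fr by auto
    have "card (f ` (E1 \<union> E2)) = m1 + m2" using card_image[OF inj] cE by simp
    then have "f ` (E1 \<union> E2) = {0..<m1 + m2}" using sub by (intro card_subset_eq) auto
    then show ?thesis using inj by (simp add: bij_betw_def)
  qed
  have mpos: "0 < m1 + m2" using m1 by simp
  show ?thesis
  proof (rule exI[of _ f], intro conjI allI impI)
    show "bij_betw f (E1 \<union> E2) {0..<m1 + m2}" by (rule bij)
    fix i assume "i < m1 + m2"
    obtain j1 where j1: "\<forall>n. ((FF (int s1) (int P) 0 n - int i) mod (int p * int P) < int g * int P)
         \<longleftrightarrow> ((n - j1) mod (int p * int s1) < int g * int s1)"
      using FF_key[of "int s1" "int P" 0 "int p" "int g" "int i"] s10 s20 p0 unfolding P_def by auto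
    obtain j2 where j2: "\<forall>n. ((FF (int s2) (int P) (int s1) n - int i) mod (int p * int P) < int g * int P)
         \<longleftrightarrow> ((n - j2) mod (int p * int s2) < int g * int s2)"
      using FF_key[of "int s2" "int P" "int s1" "int p" "int g" "int i"] s10 s20 p0 unfolding P_def by auto
    define i1 where "i1 = nat (j1 mod int m1)"
    define i2 where "i2 = nat (j2 mod int m2)"
    have i1m: "i1 < m1" unfolding i1_def using m1 by (subst nat_less_iff) auto
    have i2m: "i2 < m2" unfolding i2_def using m2 by (subst nat_less_iff) auto
    have i1e: "int i1 = j1 mod int m1" unfolding i1_def using m1 by simp
    have i2e: "int i2 = j2 mod int m2" unfolding i2_def using m2 by simp
    have eqs: "int (m1 + m2) = int p * int P" "int (r1 + r2) = int g * int P"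
      "int m1 = int p * int s1" "int r1 = int g * int s1"
      "int m2 = int p * int s2" "int r2 = int g * int s2"
      using mP rP m1e r1e m2e r2e by simp_all
    have A1: "e \<in> win f (E1 \<union> E2) (m1 + m2) (r1 + r2) i \<longleftrightarrow> e \<in> win o1 E1 m1 r1 i1"
      if eE: "e \<in> E1" for e
    proof -
      have fe: "f e < m1 + m2" using fr eE by auto
      have FFe: "int (f e) = FF (int s1) (int P) 0 (int (o1 e))"
        unfolding FF_def f1[OF eE] by (simp add: zdiv_int zmod_int)
      have "(int (f e) - int i) mod int (m1 + m2) < int (r1 + r2) \<longleftrightarrow>
            (int (o1 e) - j1) mod int m1 < int r1"
        unfolding eqs FFe using j1 by blast
      also have "\<dots> \<longleftrightarrow> (int (o1 e) - int i1) mod int m1 < int r1"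
        unfolding i1e by (simp add: mod_diff_right_eq)
      finally show ?thesis
        using win_mem[where f=f and e=e, OF mpos fe] win_mem[where f=o1 and e=e, OF m1 o1r[OF eE]] eE
        by auto
    qed
    have A2: "e \<in> win f (E1 \<union> E2) (m1 + m2) (r1 + r2) i \<longleftrightarrow> e \<in> win o2 E2 m2 r2 i2"
      if eE: "e \<in> E2" for e
    proof -
      have fe: "f e < m1 + m2" using fr eE by auto
      have FFe: "int (f e) = FF (int s2) (int P) (int s1) (int (o2 e))"
        unfolding FF_def f2[OF eE] by (simp add: zdiv_int zmod_int)
      have "(int (f e) - int i) mod int (m1 + m2) < int (r1 + r2) \<longleftrightarrow>
            (int (o2 e) - j2) mod int m2 < int r2"
        unfolding eqs FFe using j2 by blast
      also have "\<dots> \<longleftrightarrow> (int (o2 e) - int i2) mod int m2 < int r2"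
        unfolding i2e by (simp add: mod_diff_right_eq)
      finally show ?thesis
        using win_mem[where f=f and e=e, OF mpos fe] win_mem[where f=o2 and e=e, OF m2 o2r[OF eE]] eE
        by auto
    qed
    have W1: "win f (E1 \<union> E2) (m1 + m2) (r1 + r2) i \<inter> E1 = win o1 E1 m1 r1 i1"
      using A1 by (auto simp: win_def[of o1])
    have W2: "win f (E1 \<union> E2) (m1 + m2) (r1 + r2) i \<inter> E2 = win o2 E2 m2 r2 i2"
      using A2 by (auto simp: win_def[of o2])
    show "\<exists>i1<m1. \<exists>i2<m2. win f (E1 \<union> E2) (m1 + m2) (r1 + r2) i \<inter> E1 = win o1 E1 m1 r1 i1 \<and>
        win f (E1 \<union> E2) (m1 + m2) (r1 + r2) i \<inter> E2 = win o2 E2 m2 r2 i2"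
      using W1 W2 i1m i2m by blast
  qed
qed


lemma glue_simps:
  "verts (glue C k G v w) = verts C \<union> Pair k ` (verts G - {v})"
  "edges (glue C k G v w) = edges C \<union> Pair k ` edges G"
  "ends (glue C k G v w) p = (if p \<in> edges C then ends C p
                 else (\<lambda>x. if x = v then w else (k, x)) ` ends G (snd p))"
  by (simp_all add: glue_def)

lemma tag_simps:
  "verts (tag_graph k G) = Pair k ` verts G"
  "edges (tag_graph k G) = Pair k ` edges G"
  "ends (tag_graph k G) p = Pair k ` ends G (snd p)"
  by (simp_all add: tag_graph_def)

lemma rtrancl_map_rel:
  assumes "(x, y) \<in> {(a, b). R a b}\<^sup>*"
    and "\<And>a b. R a b \<Longrightarrow> S (h a) (h b)"
  shows "(h x, h y) \<in> {(a, b). S a b}\<^sup>*"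
  using assms(1)
proof (induction rule: rtrancl_induct)
  case base then show ?case by simp
next
  case (step y z)
  then have s: "(h y, h z) \<in> {(a, b). S a b}" using assms(2) by simp
  show ?case by (rule rtrancl_into_rtrancl[OF step.IH s])
qed

lemma adj_in_sym: "adj_in G T a b \<Longrightarrow> adj_in G T b a"
  unfolding adj_in_def by (auto simp: insert_commute)

lemma adj_rtrancl_sym:
  assumes "(x, y) \<in> {(a, b). adj_in G T a b}\<^sup>*"
  shows "(y, x) \<in> {(a, b). adj_in G T a b}\<^sup>*"
  using assms
proof (induction rule: rtrancl_induct)
  case base then show ?case by simp
next
  case (step y z)
  then have "(z, y) \<in> {(a, b). adj_in G T a b}" using adj_in_sym by auto
  then show ?case using step.IH by (rule converse_rtrancl_into_rtrancl)
qed

lemma connected_on_mono: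
  assumes "connected_on G T" "T \<subseteq> T'" shows "connected_on G T'"
proof -
  have "{(a,b). adj_in G T a b} \<subseteq> {(a,b). adj_in G T' a b}" using assms(2) by (auto simp: adj_in_def)
  then have "{(a,b). adj_in G T a b}\<^sup>* \<subseteq> {(a,b). adj_in G T' a b}\<^sup>*" by (rule rtrancl_mono)
  then show ?thesis using assms(1) unfolding connected_on_def by blast
qed

lemma connected_edges_ne:
  assumes "connected_graph G" "card (verts G) \<ge> 2"
  shows "edges G \<noteq> {}"
proof -
  have "Suc (Suc 0) \<le> card (verts G)" using assms(2) by simp
  then obtain a B where aB: "verts G = insert a B" "a \<notin> B" "Suc 0 \<le> card B"
    unfolding card_le_Suc_iff by blast
  then have "B \<noteq> {}" by (cases "B = {}") auto
  then obtain b where "b \<in> B" by blast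
  then obtain x y where xy: "x \<in> verts G" "y \<in> verts G" "x \<noteq> y"
    using aB by blast
  have "(x, y) \<in> {(a, b). adj_in (G::('a,'b) mgraph) (edges G) a b}\<^sup>*"
    using assms(1) xy unfolding connected_graph_def connected_on_def by blast
  then obtain z where "adj_in G (edges G) x z" using xy(3)
    by (cases rule: converse_rtranclE) auto
  then show ?thesis unfolding adj_in_def by auto
qed

lemma glue_tree:
  assumes wfC: "wf_graph C" and wfG: "wf_graph G"
    and tV: "\<forall>x\<in>verts C. fst x < k" and tE: "\<forall>e\<in>edges C. fst e < k"
    and v: "v \<in> verts G" and w: "w \<in> verts C"
    and T1: "spanning_tree C T1" and T2: "spanning_tree G T2"
  shows "spanning_tree (glue C k G v w) (T1 \<union> Pair k ` T2)"
proof -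
  let ?H = "glue C k G v w"
  let ?T = "T1 \<union> Pair k ` T2"
  define hh where "hh x = (if x = v then w else (k, x))" for x
  have T1s: "T1 \<subseteq> edges C" and T2s: "T2 \<subseteq> edges G"
    using T1 T2 unfolding spanning_tree_def by auto
  have finC: "finite (verts C)" "finite (edges C)" and finG: "finite (verts G)" "finite (edges G)"
    using wfC wfG unfolding wf_graph_def by auto
  have fT1: "finite T1" using T1s finC(2) finite_subset by blast
  have fT2: "finite T2" using T2s finG(2) finite_subset by blast
  have dT: "T1 \<inter> Pair k ` T2 = {}" using T1s tE by fastforce
  have cT: "card ?T = card T1 + card T2"
    using card_Un_disjoint[OF fT1 _ dT] fT2 card_image[of "Pair k" T2] by (simp add: inj_on_def)
  have dV: "verts C \<inter> Pair k ` (verts G - {v}) = {}" using tV by fastforce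
  have cV: "card (verts ?H) = card (verts C) + (card (verts G) - 1)"
    unfolding glue_simps using card_Un_disjoint[OF finC(1) _ dV] finG(1) v
      card_image[of "Pair k" "verts G - {v}"] by (simp add: inj_on_def)
  have "0 < card (verts C)" using w finC(1) by (auto simp: card_gt_0_iff)
  then have nC: "card (verts C) \<ge> 1" by simp
  have "0 < card (verts G)" using v finG(1) by (auto simp: card_gt_0_iff)
  then have nG: "card (verts G) \<ge> 1" by simp
  have card_ok: "card ?T = card (verts ?H) - 1"
    using cT cV nC nG T1 T2 unfolding spanning_tree_def by simp
  have sub: "?T \<subseteq> edges ?H" unfolding glue_simps using T1s T2s by auto
  let ?R = "{(a, b). adj_in ?H ?T a b}"
  have reachC: "(x, w) \<in> ?R\<^sup>*" if x: "x \<in> verts C" for x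
  proof -
    have "(x, w) \<in> {(a, b). adj_in C T1 a b}\<^sup>*"
      using T1 x w unfolding spanning_tree_def connected_on_def by blast
    then have "(id x, id w) \<in> ?R\<^sup>*"
    proof (rule rtrancl_map_rel)
      fix a b assume "adj_in C T1 a b"
      then obtain e where e: "e \<in> T1" "ends C e = {a, b}" unfolding adj_in_def by blast
      have "e \<in> edges C" using e T1s by auto
      then have "ends ?H e = {a, b}" using e by (simp add: glue_simps)
      then show "adj_in ?H ?T (id a) (id b)" using e unfolding adj_in_def by auto
    qed
    then show ?thesis by simp
  qed
  have reachG: "(hh z, w) \<in> ?R\<^sup>*" if z: "z \<in> verts G" for z
  proof -
    have "(z, v) \<in> {(a, b). adj_in G T2 a b}\<^sup>*"
      using T2 z v unfolding spanning_tree_def connected_on_def by blast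
    then have "(hh z, hh v) \<in> ?R\<^sup>*"
    proof (rule rtrancl_map_rel)
      fix a b assume "adj_in G T2 a b"
      then obtain e where e: "e \<in> T2" "ends G e = {a, b}" unfolding adj_in_def by blast
      have "(k, e) \<notin> edges C" using tE by auto
      then have "ends ?H (k, e) = {hh a, hh b}" using e by (simp add: glue_simps hh_def)
      then show "adj_in ?H ?T (hh a) (hh b)" using e unfolding adj_in_def by auto
    qed
    then show ?thesis by (simp add: hh_def)
  qed
  have reach: "(x, w) \<in> ?R\<^sup>*" if x: "x \<in> verts ?H" for x
  proof -
    have "x \<in> verts C \<or> (\<exists>z\<in>verts G - {v}. x = (k, z))" using x by (auto simp: glue_simps)
    then show ?thesis
    proof
      assume "x \<in> verts C" then show ?thesis by (rule reachC)
    next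
      assume "\<exists>z\<in>verts G - {v}. x = (k, z)"
      then obtain z where "z \<in> verts G" "z \<noteq> v" "x = (k, z)" by blast
      then show ?thesis using reachG[of z] by (simp add: hh_def)
    qed
  qed
  have conn: "connected_on ?H ?T"
    unfolding connected_on_def
  proof (intro conjI ballI)
    show "verts ?H \<noteq> {}" using w by (auto simp: glue_simps)
    fix x y assume "x \<in> verts ?H" "y \<in> verts ?H"
    then show "(x, y) \<in> ?R\<^sup>*"
      using reach adj_rtrancl_sym[OF reach] by (meson rtrancl_trans)
  qed
  show ?thesis unfolding spanning_tree_def using sub conn card_ok by blast
qed


lemma glue_wf:
  assumes wfC: "wf_graph C" and wfG: "wf_graph G"
    and tV: "\<forall>x\<in>verts C. fst x < k" and tE: "\<forall>e\<in>edges C. fst e < k"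
    and v: "v \<in> verts G" and w: "w \<in> verts C"
  shows "wf_graph (glue C k G v w)"
    and "card (edges (glue C k G v w)) = card (edges C) + card (edges G)"
    and "card (verts (glue C k G v w)) = card (verts C) + (card (verts G) - 1)"
proof -
  define hh where "hh x = (if x = v then w else (k, x))" for x
  have finC: "finite (verts C)" "finite (edges C)" and finG: "finite (verts G)" "finite (edges G)"
    using wfC wfG unfolding wf_graph_def by auto
  have dE: "edges C \<inter> Pair k ` edges G = {}" using tE by fastforce
  show "card (edges (glue C k G v w)) = card (edges C) + card (edges G)"
    unfolding glue_simps using card_Un_disjoint[OF finC(2) _ dE] finG(2)
      card_image[of "Pair k" "edges G"] by (simp add: inj_on_def)
  have dV: "verts C \<inter> Pair k ` (verts G - {v}) = {}" using tV by fastforce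
  show "card (verts (glue C k G v w)) = card (verts C) + (card (verts G) - 1)"
    unfolding glue_simps using card_Un_disjoint[OF finC(1) _ dV] finG(1) v
      card_image[of "Pair k" "verts G - {v}"] by (simp add: inj_on_def)
  have inj: "inj_on hh (verts G)"
  proof (rule inj_onI)
    fix a b assume a: "a \<in> verts G" and b: "b \<in> verts G" and e: "hh a = hh b"
    have "fst w < k" using tV w by auto
    then show "a = b" using e unfolding hh_def by (auto split: if_splits)
  qed
  show "wf_graph (glue C k G v w)"
    unfolding wf_graph_def
  proof (intro conjI)
    show "finite (verts (glue C k G v w))" "finite (edges (glue C k G v w))"
      using finC finG by (auto simp: glue_simps)
    show "\<forall>p\<in>edges (glue C k G v w). ends (glue C k G v w) p \<subseteq> verts (glue C k G v w) \<and> card (ends (glue C k G v w) p) = 2"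
    proof
    fix p assume p: "p \<in> edges (glue C k G v w)"
    show "ends (glue C k G v w) p \<subseteq> verts (glue C k G v w) \<and> card (ends (glue C k G v w) p) = 2"
    proof (cases "p \<in> edges C")
      case True
      then show ?thesis using wfC unfolding wf_graph_def by (auto simp: glue_simps)
    next
      case False
      then obtain e where e: "e \<in> edges G" "p = (k, e)" using p by (auto simp: glue_simps)
      have en: "ends (glue C k G v w) p = hh ` ends G e" using False e by (simp add: glue_simps hh_def)
      have sub: "ends G e \<subseteq> verts G" and c2: "card (ends G e) = 2"
        using wfG e unfolding wf_graph_def by auto
      have "hh ` ends G e \<subseteq> verts (glue C k G v w)"
        using sub w by (auto simp: glue_simps hh_def)
      moreover have "card (hh ` ends G e) = 2"
        using card_image[OF inj_on_subset[OF inj sub]] c2 by simp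
      ultimately show ?thesis using en by simp
    qed
    qed
  qed
qed

lemma inj_Pair_on: "inj_on (Pair k) A"
  by (simp add: inj_on_def)

lemma tag_props:
  assumes wfG: "wf_graph G"
  shows "wf_graph (tag_graph k G)"
    and "card (edges (tag_graph k G)) = card (edges G)"
    and "card (verts (tag_graph k G)) = card (verts G)"
    and "connected_on G T \<Longrightarrow> connected_on (tag_graph k G) (Pair k ` T)"
    and "spanning_tree G T \<Longrightarrow> spanning_tree (tag_graph k G) (Pair k ` T)"
proof -
  show ce: "card (edges (tag_graph k G)) = card (edges G)"
    unfolding tag_simps by (rule card_image[OF inj_Pair_on])
  show cv: "card (verts (tag_graph k G)) = card (verts G)"
    unfolding tag_simps by (rule card_image[OF inj_Pair_on])
  show "wf_graph (tag_graph k G)" using wfG unfolding wf_graph_def tag_simps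
    by (auto simp: card_image[OF inj_Pair_on])
  show co: "connected_on (tag_graph k G) (Pair k ` T)" if c: "connected_on G T" for T
    unfolding connected_on_def
  proof (intro conjI ballI)
    show "verts (tag_graph k G) \<noteq> {}" using c unfolding connected_on_def tag_simps by auto
    fix x y assume "x \<in> verts (tag_graph k G)" "y \<in> verts (tag_graph k G)"
    then obtain a b where ab: "a \<in> verts G" "b \<in> verts G" "x = (k, a)" "y = (k, b)"
      unfolding tag_simps by auto
    have "(a, b) \<in> {(a, b). adj_in G T a b}\<^sup>*" using c ab unfolding connected_on_def by blast
    then have "(Pair k a, Pair k b) \<in> {(a, b). adj_in (tag_graph k G) (Pair k ` T) a b}\<^sup>*"
    proof (rule rtrancl_map_rel)
      fix a b assume "adj_in G T a b"
      then obtain e where e: "e \<in> T" "ends G e = {a, b}" unfolding adj_in_def by blast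
      then show "adj_in (tag_graph k G) (Pair k ` T) (Pair k a) (Pair k b)"
        unfolding adj_in_def tag_simps by (intro bexI[of _ "(k, e)"]) auto
    qed
    then show "(x, y) \<in> {(a, b). adj_in (tag_graph k G) (Pair k ` T) a b}\<^sup>*" using ab by simp
  qed
  show "spanning_tree (tag_graph k G) (Pair k ` T)" if s: "spanning_tree G T"
  proof -
    have "card (Pair k ` T) = card T" by (rule card_image[OF inj_Pair_on])
    then show ?thesis using s co[of T] cv unfolding spanning_tree_def tag_simps by auto
  qed
qed

lemma cbo_window_win: "cbo_window G ord i = win ord (edges G) (card (edges G)) (card (verts G) - 1) i"
  unfolding cbo_window_def win_def by simp

lemma win_sub: "win f E m L i \<subseteq> E"
  unfolding win_def by auto

lemma win_tag: "win (\<lambda>p. f (snd p)) (Pair k ` E) m L i = Pair k ` win f E m L i"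
  unfolding win_def by (auto simp: image_iff)

lemma bij_tag:
  assumes "bij_betw f E A"
  shows "bij_betw (\<lambda>p. f (snd p)) (Pair k ` E) A"
  using assms unfolding bij_betw_def inj_on_def by (auto simp: image_image)

lemma tag_cbo:
  assumes wfG: "wf_graph G" and co: "cyclically_orderable G"
  shows "cyclically_orderable (tag_graph k G)"
proof -
  obtain ord where ord: "is_cbo G ord" using co unfolding cyclically_orderable_def by blast
  have "connected_on G (edges G)" using co unfolding cyclically_orderable_def connected_graph_def by blast
  then have "connected_graph (tag_graph k G)"
    using tag_props(4)[OF wfG] unfolding connected_graph_def tag_simps by blast
  moreover have "is_cbo (tag_graph k G) (\<lambda>p. ord (snd p))"
    unfolding is_cbo_def
  proof (intro conjI allI impI)
    show "bij_betw (\<lambda>p. ord (snd p)) (edges (tag_graph k G)) {0..<card (edges (tag_graph k G))}"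
      unfolding tag_props(2)[OF wfG] unfolding tag_simps
      using ord unfolding is_cbo_def by (intro bij_tag) blast
    fix i assume "i < card (edges (tag_graph k G))"
    then have i: "i < card (edges G)" using tag_props(2)[OF wfG] by simp
    have "cbo_window (tag_graph k G) (\<lambda>p. ord (snd p)) i = Pair k ` cbo_window G ord i"
      unfolding cbo_window_win tag_props(2,3)[OF wfG] unfolding tag_simps win_tag ..
    then show "spanning_tree (tag_graph k G) (cbo_window (tag_graph k G) (\<lambda>p. ord (snd p)) i)"
      using tag_props(5)[OF wfG] ord i unfolding is_cbo_def by auto
  qed
  ultimately show ?thesis unfolding cyclically_orderable_def by blast
qed

lemma glue_cbo:
  assumes wfC: "wf_graph C" and wfG: "wf_graph G"
    and tV: "\<forall>x\<in>verts C. fst x < k" and tE: "\<forall>e\<in>edges C. fst e < k"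
    and v: "v \<in> verts G" and w: "w \<in> verts C"
    and nC: "card (verts C) \<ge> 2" and nG: "card (verts G) \<ge> 2"
    and coC: "cyclically_orderable C" and coG: "cyclically_orderable G"
    and dens: "card (edges C) * (card (verts G) - 1) = card (edges G) * (card (verts C) - 1)"
  shows "cyclically_orderable (glue C k G v w)"
proof -
  let ?H = "glue C k G v w"
  obtain oC where oC: "is_cbo C oC" using coC unfolding cyclically_orderable_def by blast
  obtain oG where oG: "is_cbo G oG" using coG unfolding cyclically_orderable_def by blast
  have finC: "finite (edges C)" and finG: "finite (edges G)"
    using wfC wfG unfolding wf_graph_def by auto
  have m1: "card (edges C) > 0"
    using connected_edges_ne[OF _ nC] coC finC unfolding cyclically_orderable_def
    by (simp add: card_gt_0_iff)
  have m2: "card (edges G) > 0"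
    using connected_edges_ne[OF _ nG] coG finG unfolding cyclically_orderable_def
    by (simp add: card_gt_0_iff)
  have r1: "card (verts C) - 1 > 0" and r2: "card (verts G) - 1 > 0" using nC nG by auto
  have disj: "edges C \<inter> Pair k ` edges G = {}" using tE by fastforce
  have b1: "bij_betw oC (edges C) {0..<card (edges C)}" using oC unfolding is_cbo_def by blast
  have b2: "bij_betw (\<lambda>p. oG (snd p)) (Pair k ` edges G) {0..<card (edges G)}"
    using oG unfolding is_cbo_def by (intro bij_tag) blast
  obtain f where f: "bij_betw f (edges C \<union> Pair k ` edges G) {0..<card (edges C) + card (edges G)}"
    and fw: "\<forall>i < card (edges C) + card (edges G). \<exists>i1<card (edges C). \<exists>i2<card (edges G).
        win f (edges C \<union> Pair k ` edges G) (card (edges C) + card (edges G))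
            ((card (verts C) - 1) + (card (verts G) - 1)) i \<inter> edges C
          = win oC (edges C) (card (edges C)) (card (verts C) - 1) i1 \<and>
        win f (edges C \<union> Pair k ` edges G) (card (edges C) + card (edges G))
            ((card (verts C) - 1) + (card (verts G) - 1)) i \<inter> Pair k ` edges G
          = win (\<lambda>p. oG (snd p)) (Pair k ` edges G) (card (edges G)) (card (verts G) - 1) i2"
    using merge[OF disj b1 b2 r1 r2 m1 m2 dens] by blast
  have cE: "card (edges ?H) = card (edges C) + card (edges G)"
    using glue_wf(2)[OF wfC wfG tV tE v w] .
  have cV: "card (verts ?H) - 1 = (card (verts C) - 1) + (card (verts G) - 1)"
    using glue_wf(3)[OF wfC wfG tV tE v w] nC nG by simp
  have eH: "edges ?H = edges C \<union> Pair k ` edges G" by (simp add: glue_simps)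
  have cE2: "card (edges C \<union> Pair k ` edges G) = card (edges C) + card (edges G)" using cE eH by simp
  have trees: "spanning_tree ?H (cbo_window ?H f i)" if i: "i < card (edges ?H)" for i
  proof -
    have ii: "i < card (edges C) + card (edges G)" using i cE by simp
    from fw[rule_format, OF ii] obtain i1 i2 where i1: "i1 < card (edges C)" and i2: "i2 < card (edges G)"
      and w1: "win f (edges C \<union> Pair k ` edges G) (card (edges C) + card (edges G))
            ((card (verts C) - 1) + (card (verts G) - 1)) i \<inter> edges C
          = win oC (edges C) (card (edges C)) (card (verts C) - 1) i1"
      and w2: "win f (edges C \<union> Pair k ` edges G) (card (edges C) + card (edges G))
            ((card (verts C) - 1) + (card (verts G) - 1)) i \<inter> Pair k ` edges G
          = win (\<lambda>p. oG (snd p)) (Pair k ` edges G) (card (edges G)) (card (verts G) - 1) i2"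
      by blast
    define W where "W = win f (edges C \<union> Pair k ` edges G) (card (edges C) + card (edges G))
            ((card (verts C) - 1) + (card (verts G) - 1)) i"
    have "cbo_window ?H f i = W"
      unfolding W_def cbo_window_win eH cE2 cV ..
    also have "W = (W \<inter> edges C) \<union> (W \<inter> Pair k ` edges G)"
      using win_sub[of f "edges C \<union> Pair k ` edges G"] unfolding W_def by blast
    also have "\<dots> = cbo_window C oC i1 \<union> Pair k ` cbo_window G oG i2"
      using w1 w2 unfolding W_def cbo_window_win win_tag by simp
    finally have eqw: "cbo_window ?H f i = cbo_window C oC i1 \<union> Pair k ` cbo_window G oG i2" .
    have s1: "spanning_tree C (cbo_window C oC i1)" using oC i1 unfolding is_cbo_def by blast
    have s2: "spanning_tree G (cbo_window G oG i2)" using oG i2 unfolding is_cbo_def by blast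
    show ?thesis unfolding eqw by (rule glue_tree[OF wfC wfG tV tE v w s1 s2])
  qed
  have "is_cbo ?H f" unfolding is_cbo_def using trees f cE eH by simp
  moreover have "connected_graph ?H"
  proof -
    have "0 < card (edges ?H)" using cE m1 by simp
    then have "spanning_tree ?H (cbo_window ?H f 0)" by (rule trees)
    then show ?thesis unfolding connected_graph_def spanning_tree_def
      using connected_on_mono by blast
  qed
  ultimately show ?thesis unfolding cyclically_orderable_def by blast
qed


lemma dens_nat:
  assumes "card (verts G) \<ge> 2" "card (verts G') \<ge> 2" "density G = density G'"
  shows "card (edges G) * (card (verts G') - 1) = card (edges G') * (card (verts G) - 1)"
proof -
  have e1: "real (card (verts G)) - 1 = real (card (verts G) - 1)" using assms(1) by simp
  have e2: "real (card (verts G')) - 1 = real (card (verts G') - 1)" using assms(2) by simp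
  have p1: "real (card (verts G) - 1) > 0" and p2: "real (card (verts G') - 1) > 0" using assms by auto
  have "real (card (edges G)) / real (card (verts G) - 1) = real (card (edges G')) / real (card (verts G') - 1)"
    using assms(3) unfolding density_def e1 e2 .
  then have "real (card (edges G)) * real (card (verts G') - 1) = real (card (edges G')) * real (card (verts G) - 1)"
    using p1 p2 by (simp add: field_simps)
  then have "real (card (edges G) * (card (verts G') - 1)) = real (card (edges G') * (card (verts G) - 1))"
    by simp
  then show ?thesis by (simp only: of_nat_eq_iff)
qed

lemma series_inv:
  fixes Gs :: "nat \<Rightarrow> ('v, 'e) mgraph" and H :: "(nat \<times> 'v, nat \<times> 'e) mgraph" and k t :: nat
  assumes sc: "series_comp Gs k H" and kt: "k < t"
    and wf: "\<And>i. i < t \<Longrightarrow> wf_graph (Gs i)"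
    and n2: "\<And>i. i < t \<Longrightarrow> card (verts (Gs i)) \<ge> 2"
    and co: "\<And>i. i < t \<Longrightarrow> cyclically_orderable (Gs i)"
    and de: "\<And>i. i < t \<Longrightarrow> card (edges (Gs i)) * (card (verts (Gs 0)) - 1)
                 = card (edges (Gs 0)) * (card (verts (Gs i)) - 1)"
  shows "wf_graph H \<and> card (verts H) \<ge> 2 \<and> (\<forall>x\<in>verts H. fst x \<le> k) \<and> (\<forall>e\<in>edges H. fst e \<le> k)
     \<and> card (edges H) * (card (verts (Gs 0)) - 1) = card (edges (Gs 0)) * (card (verts H) - 1)
     \<and> cyclically_orderable H"
  using sc kt
proof (induction rule: series_comp.induct)
  case base
  have w0: "wf_graph (Gs 0)" using wf base by simp
  show ?case
    using tag_props(1,2,3)[OF w0, where k=0] tag_cbo[OF w0 co[of 0], where k=0] base n2[of 0]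
    by (auto simp: tag_simps mult.commute)
next
  case (step k C v w)
  let ?G = "Gs (Suc k)"
  have IH: "wf_graph C \<and> card (verts C) \<ge> 2 \<and> (\<forall>x\<in>verts C. fst x \<le> k) \<and> (\<forall>e\<in>edges C. fst e \<le> k)
     \<and> card (edges C) * (card (verts (Gs 0)) - 1) = card (edges (Gs 0)) * (card (verts C) - 1)
     \<and> cyclically_orderable C" using step by simp
  have wfC: "wf_graph C" and nC: "card (verts C) \<ge> 2" and coC: "cyclically_orderable C"
    and dC: "card (edges C) * (card (verts (Gs 0)) - 1) = card (edges (Gs 0)) * (card (verts C) - 1)"
    using IH by auto
  have tV: "\<forall>x\<in>verts C. fst x < Suc k" and tE: "\<forall>e\<in>edges C. fst e < Suc k"
    using IH by (auto simp: less_Suc_eq_le)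
  have wfG: "wf_graph ?G" and nG: "card (verts ?G) \<ge> 2" and coG: "cyclically_orderable ?G"
    and dG: "card (edges ?G) * (card (verts (Gs 0)) - 1) = card (edges (Gs 0)) * (card (verts ?G) - 1)"
    using wf n2 co de step.prems by auto
  have r0: "card (verts (Gs 0)) - 1 > 0" using n2[of 0] step.prems by simp
  define r0' where "r0' = card (verts (Gs 0)) - 1"
  define m0 where "m0 = card (edges (Gs 0))"
  have "card (edges C) * (card (verts ?G) - 1) * r0' = card (edges ?G) * (card (verts C) - 1) * r0'"
  proof -
    have "card (edges C) * (card (verts ?G) - 1) * r0' = (card (edges C) * r0') * (card (verts ?G) - 1)"
      by (simp add: ac_simps)
    also have "\<dots> = m0 * (card (verts C) - 1) * (card (verts ?G) - 1)" using dC r0'_def m0_def by simp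
    also have "\<dots> = (m0 * (card (verts ?G) - 1)) * (card (verts C) - 1)" by (simp add: ac_simps)
    also have "\<dots> = card (edges ?G) * r0' * (card (verts C) - 1)" using dG r0'_def m0_def by simp
    finally show ?thesis by (simp add: ac_simps)
  qed
  then have dens: "card (edges C) * (card (verts ?G) - 1) = card (edges ?G) * (card (verts C) - 1)"
    using r0 r0'_def by simp
  note gw = glue_wf[OF wfC wfG tV tE step.hyps(2,3)]
  have "cyclically_orderable (glue C (Suc k) ?G v w)"
    by (rule glue_cbo[OF wfC wfG tV tE step.hyps(2,3) nC nG coC coG dens])
  moreover have "card (verts (glue C (Suc k) ?G v w)) \<ge> 2" using gw(3) nC nG by simp
  moreover have "\<forall>x\<in>verts (glue C (Suc k) ?G v w). fst x \<le> Suc k"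
    using tV by (auto simp: glue_simps)
  moreover have "\<forall>e\<in>edges (glue C (Suc k) ?G v w). fst e \<le> Suc k"
    using tE by (auto simp: glue_simps)
  moreover have "card (edges (glue C (Suc k) ?G v w)) * r0' = m0 * (card (verts (glue C (Suc k) ?G v w)) - 1)"
  proof -
    have "card (verts (glue C (Suc k) ?G v w)) - 1 = (card (verts C) - 1) + (card (verts ?G) - 1)"
      using gw(3) nC nG by simp
    then show ?thesis using gw(2) dC dG r0'_def m0_def by (simp add: algebra_simps)
  qed
  ultimately show ?case using gw(1) r0'_def m0_def by simp
qed

theorem mainTheorem7:
  fixes Gs :: "nat \<Rightarrow> ('v, 'e) mgraph" and t :: nat and H :: "(nat \<times> 'v, nat \<times> 'e) mgraph"
  assumes "t \<ge> 2"
    and "\<And>i. i < t \<Longrightarrow> wf_graph (Gs i)"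
    and "\<And>i. i < t \<Longrightarrow> card (verts (Gs i)) \<ge> 2"
    and "\<And>i. i < t \<Longrightarrow> cyclically_orderable (Gs i)"
    and "\<And>i j. i < t \<Longrightarrow> j < t \<Longrightarrow> density (Gs i) = density (Gs j)"
    and "series_comp Gs (t - 1) H"
  shows "cyclically_orderable H"
proof -
  have de: "card (edges (Gs i)) * (card (verts (Gs 0)) - 1)
                 = card (edges (Gs 0)) * (card (verts (Gs i)) - 1)" if "i < t" for i
    using dens_nat[OF assms(3)[OF that] assms(3)[of 0] assms(5)[OF that, of 0]] that assms(1) by simp
  have "t - 1 < t" using assms(1) by simp
  from series_inv[OF assms(6) this assms(2,3,4) de] show ?thesis by simp
qed

end
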